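(* Let $\mathcal{M}$ (mobile devices) and $\mathcal{E}$ (edge servers) be finite nonempty index sets, and let $\hat{D}_{\text{cm},ij}\ge 0$, $\hat{D}_{\text{ES}(s),ij}\ge 0$ and $c_{ij}\in\mathbb{R}$ be given constants for $(i,j)\in\mathcal{M}\times\mathcal{E}$. Let $\mathcal{X}$ be the set of matrices $\mathbf{X}=(x_{ij})\in\{0,1\}^{\mathcal{M}\times\mathcal{E}}$ with $\sum_{j\in\mathcal{E}}x_{ij}\le 1$ for all $i\in\mathcal{M}$, and consider the primal user-association problem $$\min_{\mathbf{X}\in\mathcal{X}} F(\mathbf{X}),\qquad F(\mathbf{X})=\sum_{j\in\mathcal{E}}\Big(\sum_{i\in\mathcal{M}}\sqrt{\hat{D}_{\text{ES}(s),ij}}\,x_{ij}\Big)^2+\sum_{j\in\mathcal{E}}\Big(\sum_{i\in\mathcal{M}}\sqrt{\hat{D}_{\text{cm},ij}}\,x_{ij}\Big)^2+\sum_{i\in\mathcal{M}}\sum_{j\in\mathcal{E}}c_{ij}x_{ij},$$ with optimal value $\hat f^*=\min_{\mathbf{X}\in\mathcal{X}}F(\mathbf{X})$. This is reformulated with slack variables $a_j,b_j\ge 0$ and constraints $\sqrt{a_j}=\sum_{i}\sqrt{\hat{D}_{\text{cm},ij}}x_{ij}$, $\sqrt{b_j}=\sum_i\sqrt{\hat{D}_{\text{ES}(s),ij}}x_{ij}$ ($j\in\mathcal{E}$) and objective $\sum_j(a_j+b_j)+\sum_{i,j}c_{ij}x_{ij}$, whose Lagrangian with multipliers $\boldsymbol{\mu}=(\mu_j)_{j\in\mathcal{E}}$,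 $\boldsymbol{\nu}=(\nu_j)_{j\in\mathcal{E}}$ is $$\mathcal{L}(\mathbf{X},\mathbf{a},\mathbf{b};\boldsymbol{\mu},\boldsymbol{\nu})=\sum_{j}(a_j+b_j)+\sum_{i,j}c_{ij}x_{ij}+\sum_j\mu_j\Big(-\sqrt{a_j}+\sum_i\sqrt{\hat{D}_{\text{cm},ij}}x_{ij}\Big)+\sum_j\nu_j\Big(-\sqrt{b_j}+\sum_i\sqrt{\hat{D}_{\text{ES}(s),ij}}x_{ij}\Big).$$ Define the dual function $$g(\boldsymbol{\mu},\boldsymbol{\nu})=-\sum_{j\in\mathcal{E}}\Big(\frac{\mu_j^2}{4}+\frac{\nu_j^2}{4}\Big)+\sum_{i\in\mathcal{M}}\min\Big\{0,\ \min_{j\in\mathcal{E}}\big(\mu_j\sqrt{\hat{D}_{\text{cm},ij}}+\nu_j\sqrt{\hat{D}_{\text{ES}(s),ij}}+c_{ij}\big)\Big\},$$ let $(\boldsymbol{\mu}^*,\boldsymbol{\nu}^* )$ be a maximizer of $g$, and define the recovered solution $\hat a_j=(\mu_j^* )^2/4$, $\hat b_j=(\nu_j^* )^2/4$, and $\hat{\mathbf{X}}\in\mathcal{X}$ by: for each $i$, $\hat x_{ij}=1$ for $j=\arg\min_{j\in\mathcal{E}}(\mu^*_j\sqrt{\hat{D}_{\text{cm},ij}}+\nu^*_j\sqrt{\hat{D}_{\text{ES}(s),ij}}+c_{ij})$ if this minimum is not larger than $0$, and $\hat x_{ij}=0$ for all other $j$ (all $\hat x_{ij}=0$ if the minimum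 is larger than $0$). Let $$\Delta_j^{(1)}=\sqrt{\hat a_j}-\sum_{i\in\mathcal{M}}\sqrt{\hat{D}_{\text{cm},ij}}\,\hat x_{ij},\qquad \Delta_j^{(2)}=\sqrt{\hat b_j}-\sum_{i\in\mathcal{M}}\sqrt{\hat{D}_{\text{ES}(s),ij}}\,\hat x_{ij}.$$ Then the performance gap between $\hat{\mathbf{X}}$ and the globally optimal solution, $F(\hat{\mathbf{X}})-\hat f^*$, is bounded by $\mathcal{O}\big(\sum_{j\in\mathcal{E}}((\Delta_j^{(1)})^2+(\Delta_j^{(2)})^2)\big)$.
   Context: This arises from a mobile edge computing model: $x_{ij}=1$ means mobile device $i$ offloads its task to edge server $j$, and $x_{ij}=0$ for all $j$ means local computation. The constants are $\hat{D}_{\text{cm},ij}=d_i/R_{ij}$ (task bits over rate), $\hat{D}_{\text{ES}(s),ij}=f_i\rho_i/(F_{\text{ES},j}Z_{\text{ES},j})$, and $c_{ij}$ collects the remaining delay/energy-penalty terms; only the abstract optimization problem above matters for the claim. *)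

theory Defs
  imports Complex_Main
begin

text \<open>Association matrices X indexed by devices i (type 'm) and servers j (type 'e).
  Entries outside M x E are fixed to 0, so the feasible set is finite.\<close>
definition feasible :: "'m set \<Rightarrow> 'e set \<Rightarrow> ('m \<Rightarrow> 'e \<Rightarrow> real) set" where
  "feasible M E = {X. (\<forall>i j. X i j \<in> {0, 1}) \<and> (\<forall>i j. (i \<notin> M \<or> j \<notin> E) \<longrightarrow> X i j = 0)
                      \<and> (\<forall>i\<in>M. (\<Sum>j\<in>E. X i j) \<le> 1)}"

definition objF :: "'m set \<Rightarrow> 'e set \<Rightarrow> ('m \<Rightarrow> 'e \<Rightarrow> real) \<Rightarrow> ('m \<Rightarrow> 'e \<Rightarrow> real)
    \<Rightarrow> ('m \<Rightarrow> 'e \<Rightarrow> real) \<Rightarrow> ('m \<Rightarrow> 'e \<Rightarrow> real) \<Rightarrow> real" where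
  "objF M E Dcm Des c X =
     (\<Sum>j\<in>E. (\<Sum>i\<in>M. sqrt (Des i j) * X i j)^2)
   + (\<Sum>j\<in>E. (\<Sum>i\<in>M. sqrt (Dcm i j) * X i j)^2)
   + (\<Sum>i\<in>M. \<Sum>j\<in>E. c i j * X i j)"

definition fstar :: "'m set \<Rightarrow> 'e set \<Rightarrow> ('m \<Rightarrow> 'e \<Rightarrow> real) \<Rightarrow> ('m \<Rightarrow> 'e \<Rightarrow> real)
    \<Rightarrow> ('m \<Rightarrow> 'e \<Rightarrow> real) \<Rightarrow> real" where
  "fstar M E Dcm Des c = Min (objF M E Dcm Des c ` feasible M E)"

definition phi :: "('m \<Rightarrow> 'e \<Rightarrow> real) \<Rightarrow> ('m \<Rightarrow> 'e \<Rightarrow> real) \<Rightarrow> ('m \<Rightarrow> 'e \<Rightarrow> real)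
    \<Rightarrow> ('e \<Rightarrow> real) \<Rightarrow> ('e \<Rightarrow> real) \<Rightarrow> 'm \<Rightarrow> 'e \<Rightarrow> real" where
  "phi Dcm Des c mu nu i j = mu j * sqrt (Dcm i j) + nu j * sqrt (Des i j) + c i j"

definition dual_g :: "'m set \<Rightarrow> 'e set \<Rightarrow> ('m \<Rightarrow> 'e \<Rightarrow> real) \<Rightarrow> ('m \<Rightarrow> 'e \<Rightarrow> real)
    \<Rightarrow> ('m \<Rightarrow> 'e \<Rightarrow> real) \<Rightarrow> ('e \<Rightarrow> real) \<Rightarrow> ('e \<Rightarrow> real) \<Rightarrow> real" where
  "dual_g M E Dcm Des c mu nu =
     - (\<Sum>j\<in>E. (mu j)^2 / 4 + (nu j)^2 / 4)
   + (\<Sum>i\<in>M. min 0 (Min (phi Dcm Des c mu nu i ` E)))"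

definition recovered :: "'m set \<Rightarrow> 'e set \<Rightarrow> ('m \<Rightarrow> 'e \<Rightarrow> real) \<Rightarrow> ('m \<Rightarrow> 'e \<Rightarrow> real)
    \<Rightarrow> ('m \<Rightarrow> 'e \<Rightarrow> real) \<Rightarrow> ('e \<Rightarrow> real) \<Rightarrow> ('e \<Rightarrow> real) \<Rightarrow> ('m \<Rightarrow> 'e \<Rightarrow> real) \<Rightarrow> bool" where
  "recovered M E Dcm Des c mu nu X \<longleftrightarrow>
     (\<forall>i\<in>M. (Min (phi Dcm Des c mu nu i ` E) \<le> 0 \<longrightarrow>
                 (\<exists>j\<in>E. phi Dcm Des c mu nu i j = Min (phi Dcm Des c mu nu i ` E)
                        \<and> X i j = 1 \<and> (\<forall>k\<in>E. k \<noteq> j \<longrightarrow> X i k = 0)))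
           \<and> (Min (phi Dcm Des c mu nu i ` E) > 0 \<longrightarrow> (\<forall>j\<in>E. X i j = 0)))"

end

theory Submission
  imports Defs
begin

lemma feasible_finite:
  fixes M :: "'m set" and E :: "'e set"
  assumes "finite M" "finite E"
  shows "finite (feasible M E)"
proof -
  define S where "S = {g::'e \<Rightarrow> real. \<forall>j. (j \<in> E \<longrightarrow> g j \<in> {0,1}) \<and> (j \<notin> E \<longrightarrow> g j = 0)}"
  have fS: "finite S" unfolding S_def
    by (rule finite_set_of_finite_funs[OF assms(2)]) simp
  have "finite {X::'m \<Rightarrow> 'e \<Rightarrow> real. \<forall>i. (i \<in> M \<longrightarrow> X i \<in> S) \<and> (i \<notin> M \<longrightarrow> X i = (\<lambda>_. 0))}"
    by (rule finite_set_of_finite_funs[OF assms(1) fS])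
  moreover have "feasible M E \<subseteq> {X::'m \<Rightarrow> 'e \<Rightarrow> real. \<forall>i. (i \<in> M \<longrightarrow> X i \<in> S) \<and> (i \<notin> M \<longrightarrow> X i = (\<lambda>_. 0))}"
    unfolding feasible_def S_def by (auto simp: fun_eq_iff)
  ultimately show ?thesis by (rule finite_subset[rotated])
qed

lemma zero_feasible: "(\<lambda>_ _. 0) \<in> feasible M E"
  unfolding feasible_def by auto

lemma objF_identity:
  fixes M :: "'m set" and E :: "'e set"
  shows "objF M E Dcm Des c X =
    - (\<Sum>j\<in>E. (mu j)^2 / 4 + (nu j)^2 / 4)
    + (\<Sum>i\<in>M. \<Sum>j\<in>E. X i j * phi Dcm Des c mu nu i j)
    + (\<Sum>j\<in>E. ((\<Sum>i\<in>M. sqrt (Dcm i j) * X i j) - mu j / 2)^2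
              + ((\<Sum>i\<in>M. sqrt (Des i j) * X i j) - nu j / 2)^2)"
proof -
  define A where "A j = (\<Sum>i\<in>M. sqrt (Dcm i j) * X i j)" for j
  define B where "B j = (\<Sum>i\<in>M. sqrt (Des i j) * X i j)" for j
  have 1: "(\<Sum>i\<in>M. \<Sum>j\<in>E. X i j * phi Dcm Des c mu nu i j)
      = (\<Sum>j\<in>E. mu j * A j) + (\<Sum>j\<in>E. nu j * B j) + (\<Sum>i\<in>M. \<Sum>j\<in>E. c i j * X i j)"
  proof -
    have "(\<Sum>i\<in>M. \<Sum>j\<in>E. X i j * phi Dcm Des c mu nu i j)
       = (\<Sum>i\<in>M. \<Sum>j\<in>E. mu j * (sqrt (Dcm i j) * X i j) + nu j * (sqrt (Des i j) * X i j) + c i j * X i j)"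
      unfolding phi_def by (intro sum.cong refl) (simp add: algebra_simps)
    also have "\<dots> = (\<Sum>i\<in>M. \<Sum>j\<in>E. mu j * (sqrt (Dcm i j) * X i j)) + (\<Sum>i\<in>M. \<Sum>j\<in>E. nu j * (sqrt (Des i j) * X i j)) + (\<Sum>i\<in>M. \<Sum>j\<in>E. c i j * X i j)"
      by (simp add: sum.distrib)
    also have "(\<Sum>i\<in>M. \<Sum>j\<in>E. mu j * (sqrt (Dcm i j) * X i j)) = (\<Sum>j\<in>E. mu j * A j)"
      unfolding A_def by (subst sum.swap) (simp add: sum_distrib_left)
    also have "(\<Sum>i\<in>M. \<Sum>j\<in>E. nu j * (sqrt (Des i j) * X i j)) = (\<Sum>j\<in>E. nu j * B j)"
      unfolding B_def by (subst sum.swap) (simp add: sum_distrib_left)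
    finally show ?thesis .
  qed
  have 2: "(\<Sum>j\<in>E. (A j - mu j / 2)^2 + (B j - nu j / 2)^2)
     = (\<Sum>j\<in>E. (A j)^2) + (\<Sum>j\<in>E. (B j)^2) - (\<Sum>j\<in>E. mu j * A j) - (\<Sum>j\<in>E. nu j * B j)
       + (\<Sum>j\<in>E. (mu j)^2 / 4 + (nu j)^2 / 4)"
  proof -
    have "(\<Sum>j\<in>E. (A j - mu j / 2)^2 + (B j - nu j / 2)^2)
       = (\<Sum>j\<in>E. (A j)^2 + (B j)^2 - mu j * A j - nu j * B j + ((mu j)^2 / 4 + (nu j)^2 / 4))"
      by (intro sum.cong refl) (simp add: power2_eq_square algebra_simps)
    then show ?thesis by (simp add: sum.distrib sum_subtractf)
  qed
  show ?thesis unfolding objF_def 1 A_def[symmetric] B_def[symmetric] 2 by simp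
qed

lemma row_lower:
  fixes E :: "'e set" and x p :: "'e \<Rightarrow> real"
  assumes "finite E" "\<forall>j. x j \<in> {0,1}" "(\<Sum>j\<in>E. x j) \<le> 1"
  shows "(\<Sum>j\<in>E. x j * p j) \<ge> min 0 (Min (p ` E))"
proof -
  define m where "m = min 0 (Min (p ` E))"
  have x0: "x j \<ge> 0" for j
  proof -
    have "x j = 0 \<or> x j = 1" using assms(2) by blast
    then show ?thesis by auto
  qed
  have mp: "m \<le> p j" if "j \<in> E" for j
  proof -
    have "Min (p ` E) \<le> p j" using that assms(1) by (intro Min_le) auto
    then show ?thesis unfolding m_def by linarith
  qed
  have "(\<Sum>j\<in>E. x j * m) \<le> (\<Sum>j\<in>E. x j * p j)"
  proof (rule sum_mono)
    fix j assume "j \<in> E"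
    then show "x j * m \<le> x j * p j" using mp x0 by (intro mult_left_mono) auto
  qed
  moreover have "(\<Sum>j\<in>E. x j * m) = m * (\<Sum>j\<in>E. x j)"
    by (simp add: sum_distrib_left mult.commute)
  moreover have "m * (\<Sum>j\<in>E. x j) \<ge> m"
  proof -
    have "m \<le> 0" unfolding m_def by linarith
    moreover have "(\<Sum>j\<in>E. x j) - 1 \<le> 0" using assms(3) by linarith
    ultimately have "m * ((\<Sum>j\<in>E. x j) - 1) \<ge> 0" by (rule mult_nonpos_nonpos)
    then show ?thesis by (simp add: algebra_simps)
  qed
  ultimately show ?thesis unfolding m_def by linarith
qed

lemma weak_duality:
  fixes M :: "'m set" and E :: "'e set"
  assumes "finite M" "finite E" "X \<in> feasible M E"
  shows "dual_g M E Dcm Des c mu nu \<le> objF M E Dcm Des c X"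
proof -
  have "(\<Sum>i\<in>M. min 0 (Min (phi Dcm Des c mu nu i ` E))) \<le> (\<Sum>i\<in>M. \<Sum>j\<in>E. X i j * phi Dcm Des c mu nu i j)"
    using assms by (intro sum_mono row_lower) (auto simp: feasible_def)
  moreover have "(\<Sum>j\<in>E. ((\<Sum>i\<in>M. sqrt (Dcm i j) * X i j) - mu j / 2)^2
              + ((\<Sum>i\<in>M. sqrt (Des i j) * X i j) - nu j / 2)^2) \<ge> 0"
    by (intro sum_nonneg) auto
  ultimately show ?thesis unfolding objF_identity[of M E Dcm Des c X mu nu] dual_g_def by linarith
qed

lemma fstar_ge:
  fixes M :: "'m set" and E :: "'e set"
  assumes "finite M" "finite E"
  shows "dual_g M E Dcm Des c mu nu \<le> fstar M E Dcm Des c"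
  unfolding fstar_def using assms feasible_finite[OF assms] zero_feasible[of M E]
  by (subst Min_ge_iff) (auto intro: weak_duality)

lemma Min_mono_pw:
  fixes f g :: "'e \<Rightarrow> real"
  assumes "finite E" "E \<noteq> {}" "\<forall>k\<in>E. f k \<le> g k"
  shows "Min (f ` E) \<le> Min (g ` E)"
proof -
  have "Min (g ` E) \<in> g ` E" using assms by (intro Min_in) auto
  then obtain k where k: "k \<in> E" "g k = Min (g ` E)" by auto
  have "Min (f ` E) \<le> f k" using assms k by simp
  also have "f k \<le> g k" using assms(3) k(1) by blast
  finally show ?thesis using k by simp
qed

lemma mu_nonneg:
  fixes M :: "'m set" and E :: "'e set"
  assumes fM: "finite M" and fE: "finite E" and nE: "E \<noteq> {}"
    and D: "\<forall>i\<in>M. \<forall>j\<in>E. Dcm i j \<ge> 0 \<and> Des i j \<ge> 0"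
    and opt: "\<forall>mu nu. dual_g M E Dcm Des c mu nu \<le> dual_g M E Dcm Des c mus nus"
    and j: "j \<in> E"
  shows "mus j \<ge> 0"
proof (rule ccontr)
  assume neg: "\<not> mus j \<ge> 0"
  define mu' where "mu' = mus(j := 0)"
  have "(\<Sum>k\<in>E. (mu' k)^2 / 4 + (nus k)^2 / 4) < (\<Sum>k\<in>E. (mus k)^2 / 4 + (nus k)^2 / 4)"
  proof (rule sum_strict_mono_ex1[OF fE])
    show "\<forall>k\<in>E. (mu' k)^2 / 4 + (nus k)^2 / 4 \<le> (mus k)^2 / 4 + (nus k)^2 / 4"
      unfolding mu'_def by auto
    show "\<exists>k\<in>E. (mu' k)^2 / 4 + (nus k)^2 / 4 < (mus k)^2 / 4 + (nus k)^2 / 4"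
      using j neg unfolding mu'_def by (intro bexI[of _ j]) auto
  qed
  moreover have "(\<Sum>i\<in>M. min 0 (Min (phi Dcm Des c mus nus i ` E))) \<le> (\<Sum>i\<in>M. min 0 (Min (phi Dcm Des c mu' nus i ` E)))"
  proof (intro sum_mono min.mono order.refl Min_mono_pw[OF fE nE] ballI)
    fix i k assume i: "i \<in> M" and k: "k \<in> E"
    have "sqrt (Dcm i k) \<ge> 0" using D i k by simp
    then have "mus k * sqrt (Dcm i k) \<le> mu' k * sqrt (Dcm i k)"
      using neg unfolding mu'_def by (cases "k = j") (auto simp: mult_nonpos_nonneg)
    then show "phi Dcm Des c mus nus i k \<le> phi Dcm Des c mu' nus i k"
      unfolding phi_def by simp
  qed
  ultimately have "dual_g M E Dcm Des c mus nus < dual_g M E Dcm Des c mu' nus"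
    unfolding dual_g_def by linarith
  with opt show False by (meson not_le)
qed

lemma nu_nonneg:
  fixes M :: "'m set" and E :: "'e set"
  assumes fM: "finite M" and fE: "finite E" and nE: "E \<noteq> {}"
    and D: "\<forall>i\<in>M. \<forall>j\<in>E. Dcm i j \<ge> 0 \<and> Des i j \<ge> 0"
    and opt: "\<forall>mu nu. dual_g M E Dcm Des c mu nu \<le> dual_g M E Dcm Des c mus nus"
    and j: "j \<in> E"
  shows "nus j \<ge> 0"
proof (rule ccontr)
  assume neg: "\<not> nus j \<ge> 0"
  define nu' where "nu' = nus(j := 0)"
  have "(\<Sum>k\<in>E. (mus k)^2 / 4 + (nu' k)^2 / 4) < (\<Sum>k\<in>E. (mus k)^2 / 4 + (nus k)^2 / 4)"
  proof (rule sum_strict_mono_ex1[OF fE])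
    show "\<forall>k\<in>E. (mus k)^2 / 4 + (nu' k)^2 / 4 \<le> (mus k)^2 / 4 + (nus k)^2 / 4"
      unfolding nu'_def by auto
    show "\<exists>k\<in>E. (mus k)^2 / 4 + (nu' k)^2 / 4 < (mus k)^2 / 4 + (nus k)^2 / 4"
      using j neg unfolding nu'_def by (intro bexI[of _ j]) auto
  qed
  moreover have "(\<Sum>i\<in>M. min 0 (Min (phi Dcm Des c mus nus i ` E))) \<le> (\<Sum>i\<in>M. min 0 (Min (phi Dcm Des c mus nu' i ` E)))"
  proof (intro sum_mono min.mono order.refl Min_mono_pw[OF fE nE] ballI)
    fix i k assume i: "i \<in> M" and k: "k \<in> E"
    have "sqrt (Des i k) \<ge> 0" using D i k by simp
    then have "nus k * sqrt (Des i k) \<le> nu' k * sqrt (Des i k)"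
      using neg unfolding nu'_def by (cases "k = j") (auto simp: mult_nonpos_nonneg)
    then show "phi Dcm Des c mus nus i k \<le> phi Dcm Des c mus nu' i k"
      unfolding phi_def by simp
  qed
  ultimately have "dual_g M E Dcm Des c mus nus < dual_g M E Dcm Des c mus nu'"
    unfolding dual_g_def by linarith
  with opt show False by (meson not_le)
qed

lemma row_exact:
  fixes M :: "'m set" and E :: "'e set"
  assumes fE: "finite E" and rec: "recovered M E Dcm Des c mu nu X" and i: "i \<in> M"
  shows "(\<Sum>j\<in>E. X i j * phi Dcm Des c mu nu i j) = min 0 (Min (phi Dcm Des c mu nu i ` E))"
proof (cases "Min (phi Dcm Des c mu nu i ` E) \<le> 0")
  case True
  then obtain j where j: "j \<in> E" "phi Dcm Des c mu nu i j = Min (phi Dcm Des c mu nu i ` E)"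
      "X i j = 1" "\<forall>k\<in>E. k \<noteq> j \<longrightarrow> X i k = 0"
    using rec i unfolding recovered_def by blast
  have "(\<Sum>k\<in>E. X i k * phi Dcm Des c mu nu i k) = X i j * phi Dcm Des c mu nu i j
        + (\<Sum>k\<in>E - {j}. X i k * phi Dcm Des c mu nu i k)"
    using fE j(1) by (rule sum.remove)
  also have "(\<Sum>k\<in>E - {j}. X i k * phi Dcm Des c mu nu i k) = 0"
    using j(4) by (intro sum.neutral) auto
  finally show ?thesis using j True by simp
next
  case False
  then have "\<forall>j\<in>E. X i j = 0" using rec i unfolding recovered_def by auto
  then show ?thesis using False by simp
qed

theorem theorem1:
  shows "\<exists>C::real. \<forall>(M::'m set) (E::'e set) Dcm Des c mus nus Xh.
    finite M \<and> M \<noteq> {} \<and> finite E \<and> E \<noteq> {}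
    \<and> (\<forall>i\<in>M. \<forall>j\<in>E. Dcm i j \<ge> 0 \<and> Des i j \<ge> 0)
    \<and> (\<forall>mu nu. dual_g M E Dcm Des c mu nu \<le> dual_g M E Dcm Des c mus nus)
    \<and> recovered M E Dcm Des c mus nus Xh
    \<longrightarrow> objF M E Dcm Des c Xh - fstar M E Dcm Des c
        \<le> C * (\<Sum>j\<in>E. (sqrt ((mus j)^2 / 4) - (\<Sum>i\<in>M. sqrt (Dcm i j) * Xh i j))^2
                      + (sqrt ((nus j)^2 / 4) - (\<Sum>i\<in>M. sqrt (Des i j) * Xh i j))^2)"
proof (intro exI[of _ 1] allI impI)
  fix M :: "'m set" and E :: "'e set" and Dcm Des c mus nus Xh
  assume H: "finite M \<and> M \<noteq> {} \<and> finite E \<and> E \<noteq> {}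
    \<and> (\<forall>i\<in>M. \<forall>j\<in>E. Dcm i j \<ge> 0 \<and> Des i j \<ge> 0)
    \<and> (\<forall>mu nu. dual_g M E Dcm Des c mu nu \<le> dual_g M E Dcm Des c mus nus)
    \<and> recovered M E Dcm Des c mus nus Xh"
  then have fM: "finite M" and fE: "finite E" and nE: "E \<noteq> {}"
    and D: "\<forall>i\<in>M. \<forall>j\<in>E. Dcm i j \<ge> 0 \<and> Des i j \<ge> 0"
    and opt: "\<forall>mu nu. dual_g M E Dcm Des c mu nu \<le> dual_g M E Dcm Des c mus nus"
    and rec: "recovered M E Dcm Des c mus nus Xh" by auto
  define Q where "Q = (\<Sum>j\<in>E. ((\<Sum>i\<in>M. sqrt (Dcm i j) * Xh i j) - mus j / 2)^2
              + ((\<Sum>i\<in>M. sqrt (Des i j) * Xh i j) - nus j / 2)^2)"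
  have "(\<Sum>i\<in>M. \<Sum>j\<in>E. Xh i j * phi Dcm Des c mus nus i j)
      = (\<Sum>i\<in>M. min 0 (Min (phi Dcm Des c mus nus i ` E)))"
    using row_exact[OF fE rec] by simp
  then have eq: "objF M E Dcm Des c Xh = dual_g M E Dcm Des c mus nus + Q"
    unfolding objF_identity[of M E Dcm Des c Xh mus nus] dual_g_def Q_def by simp
  have fs: "dual_g M E Dcm Des c mus nus \<le> fstar M E Dcm Des c"
    by (rule fstar_ge[OF fM fE])
  have "Q = (\<Sum>j\<in>E. (sqrt ((mus j)^2 / 4) - (\<Sum>i\<in>M. sqrt (Dcm i j) * Xh i j))^2
                      + (sqrt ((nus j)^2 / 4) - (\<Sum>i\<in>M. sqrt (Des i j) * Xh i j))^2)"
    unfolding Q_def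
  proof (intro sum.cong refl)
    fix j assume j: "j \<in> E"
    have m: "mus j \<ge> 0" by (rule mu_nonneg[OF fM fE nE D opt j])
    have n: "nus j \<ge> 0" by (rule nu_nonneg[OF fM fE nE D opt j])
    have s1: "sqrt ((mus j)^2 / 4) = mus j / 2" using m
      by (simp add: real_sqrt_divide)
    have s2: "sqrt ((nus j)^2 / 4) = nus j / 2" using n
      by (simp add: real_sqrt_divide)
    show "((\<Sum>i\<in>M. sqrt (Dcm i j) * Xh i j) - mus j / 2)^2
              + ((\<Sum>i\<in>M. sqrt (Des i j) * Xh i j) - nus j / 2)^2
        = (sqrt ((mus j)^2 / 4) - (\<Sum>i\<in>M. sqrt (Dcm i j) * Xh i j))^2
                      + (sqrt ((nus j)^2 / 4) - (\<Sum>i\<in>M. sqrt (Des i j) * Xh i j))^2"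
      unfolding s1 s2 by (simp add: power2_commute)
  qed
  then show "objF M E Dcm Des c Xh - fstar M E Dcm Des c
        \<le> 1 * (\<Sum>j\<in>E. (sqrt ((mus j)^2 / 4) - (\<Sum>i\<in>M. sqrt (Dcm i j) * Xh i j))^2
                      + (sqrt ((nus j)^2 / 4) - (\<Sum>i\<in>M. sqrt (Des i j) * Xh i j))^2)"
    using eq fs by simp
qed

end
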